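(* Let $E_1,E_2,E_3,H_1,H_2,H_3$ be logically independent events with $H_i\ne\emptyset$. For every $(x_1,x_2,x_3)\in[0,1]^3$ the assessment $$\mathcal M=(x_1,x_2,x_3,x_1x_2,x_1x_3,x_2x_3,x_1x_2x_3)$$ on $\mathcal F=\{\mathscr C_1,\mathscr C_2,\mathscr C_3,\mathscr C_{12},\mathscr C_{13},\mathscr C_{23},\mathscr C_{123}\}$ is coherent. Moreover, under this assessment, as random quantities $\mathscr C_{ij}=\mathscr C_i\mathscr C_j$ for $i\ne j$ and $\mathscr C_{123}=\mathscr C_1\mathscr C_2\mathscr C_3$.
   Context: Events are identified with their indicators; $\bar E$ is the negation of $E$. For $H\ne\emptyset$ the conditional event $E|H$ is true if $EH$ is true, false if $\bar EH$ is true, void if $\bar H$ is true; with $P(E|H)=x$ it is identified with the random quantity $EH+x\bar H$, and a conditional random quantity $X|H$ with prevision $\mu$ with $XH+\mu\bar H$. Coherence (de Finetti): an assessment $(\mu_1,\dots,\mu_m)$ on $\{X_1|H_1,\dots,X_m|H_m\}$ is coherent iff for all real stakes $s_i$ the gain $G=\sum_is_iH_i(X_i-\mu_i)$, restricted to $H_1\vee\dots\vee H_m$, satisfies $\min G\le0\le\max G$. Logical independence: all conjunctions of the listed events or their negations are nonempty. Notation: $\mathscr C_i=E_i|H_i$, $\mathscr C_{ij}=(E_i|H_i)\wedge(E_j|H_j)$, $\mathscr C_{123}=(E_1|H_1)\wedge(E_2|H_2)\wedge(E_3|H_3)$, with previsions $x_i,x_{ij},x_{123}$ in the order of $\mathcal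 F$. Conjunction of two: $\mathscr C_{ij}$ equals $1$ if $E_iH_iE_jH_j$ true, $0$ if $\bar E_iH_i\vee\bar E_jH_j$ true, $x_i$ if $\bar H_iE_jH_j$ true, $x_j$ if $\bar H_jE_iH_i$ true, $x_{ij}$ if $\bar H_i\bar H_j$ true. $\mathscr C_{123}$ equals $1$ if $E_1H_1E_2H_2E_3H_3$ true; $0$ if $\bar E_1H_1\vee\bar E_2H_2\vee\bar E_3H_3$ true; $x_1$, $x_2$, $x_3$ if respectively $\bar H_1E_2H_2E_3H_3$, $\bar H_2E_1H_1E_3H_3$, $\bar H_3E_1H_1E_2H_2$ true; $x_{12}$, $x_{13}$, $x_{23}$ if respectively $\bar H_1\bar H_2E_3H_3$, $\bar H_1\bar H_3E_2H_2$, $\bar H_2\bar H_3E_1H_1$ true; $x_{123}$ if $\bar H_1\bar H_2\bar H_3$ true. *)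

theory Defs
  imports Complex_Main
begin

definition ind :: "'w set \<Rightarrow> 'w \<Rightarrow> real" where
  "ind A w = (if w \<in> A then 1 else 0)"

definition logically_independent :: "'w set list \<Rightarrow> bool" where
  "logically_independent As \<longleftrightarrow>
     (\<forall>b :: nat \<Rightarrow> bool. \<exists>w. \<forall>i < length As. (w \<in> As ! i \<longleftrightarrow> b i))"

text \<open>Coherence (de Finetti) of a prevision assessment on a family of conditional random
  quantities X_i|H_i, given as triples (X_i, H_i, mu_i): for all real stakes s_i, the gain
  G = sum_i s_i H_i (X_i - mu_i), restricted to H_1 \<or> ... \<or> H_m, satisfies min G \<le> 0 \<le> max G.\<close>
definition gain :: "(('w \<Rightarrow> real) \<times> 'w set \<times> real) list \<Rightarrow> (nat \<Rightarrow> real) \<Rightarrow> 'w \<Rightarrow> real" where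
  "gain F s w = (\<Sum>i<length F. s i * ind (fst (snd (F ! i))) w
                    * (fst (F ! i) w - snd (snd (F ! i))))"

definition coherent :: "(('w \<Rightarrow> real) \<times> 'w set \<times> real) list \<Rightarrow> bool" where
  "coherent F \<longleftrightarrow>
     (\<forall>s :: nat \<Rightarrow> real.
        (\<exists>w \<in> (\<Union>i<length F. fst (snd (F ! i))). gain F s w \<le> 0) \<and>
        (\<exists>w \<in> (\<Union>i<length F. fst (snd (F ! i))). 0 \<le> gain F s w))"

text \<open>Conditional event E|H with P(E|H)=x, as the random quantity EH + x(not H).\<close>
definition cev :: "'w set \<Rightarrow> 'w set \<Rightarrow> real \<Rightarrow> 'w \<Rightarrow> real" where
  "cev E H x w = (if w \<in> H then ind E w else x)"

text \<open>Conjunction (E_i|H_i) \<and> (E_j|H_j) with previsions x_i, x_j, x_ij.\<close>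
definition conj2 :: "'w set \<Rightarrow> 'w set \<Rightarrow> real \<Rightarrow> 'w set \<Rightarrow> 'w set \<Rightarrow> real \<Rightarrow> real \<Rightarrow> 'w \<Rightarrow> real" where
  "conj2 Ei Hi xi Ej Hj xj xij w =
     (if w \<in> Ei \<inter> Hi \<inter> Ej \<inter> Hj then 1
      else if w \<in> (Hi - Ei) \<union> (Hj - Ej) then 0
      else if w \<notin> Hi \<and> w \<in> Ej \<inter> Hj then xi
      else if w \<notin> Hj \<and> w \<in> Ei \<inter> Hi then xj
      else xij)"

text \<open>Conjunction (E_1|H_1) \<and> (E_2|H_2) \<and> (E_3|H_3) with previsions x1,x2,x3,x12,x13,x23,x123.\<close>
definition conj3 :: "'w set \<Rightarrow> 'w set \<Rightarrow> 'w set \<Rightarrow> 'w set \<Rightarrow> 'w set \<Rightarrow> 'w set \<Rightarrow>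
    real \<Rightarrow> real \<Rightarrow> real \<Rightarrow> real \<Rightarrow> real \<Rightarrow> real \<Rightarrow> real \<Rightarrow> 'w \<Rightarrow> real" where
  "conj3 E1 H1 E2 H2 E3 H3 x1 x2 x3 x12 x13 x23 x123 w =
     (if w \<in> E1 \<inter> H1 \<inter> E2 \<inter> H2 \<inter> E3 \<inter> H3 then 1
      else if w \<in> (H1 - E1) \<union> (H2 - E2) \<union> (H3 - E3) then 0
      else if w \<notin> H1 \<and> w \<in> E2 \<inter> H2 \<inter> E3 \<inter> H3 then x1
      else if w \<notin> H2 \<and> w \<in> E1 \<inter> H1 \<inter> E3 \<inter> H3 then x2
      else if w \<notin> H3 \<and> w \<in> E1 \<inter> H1 \<inter> E2 \<inter> H2 then x3
      else if w \<notin> H1 \<and> w \<notin> H2 \<and> w \<in> E3 \<inter> H3 then x12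
      else if w \<notin> H1 \<and> w \<notin> H3 \<and> w \<in> E2 \<inter> H2 then x13
      else if w \<notin> H2 \<and> w \<notin> H3 \<and> w \<in> E1 \<inter> H1 then x23
      else x123)"

end

theory Submission
  imports Defs
begin

lemma aff_min: "0 \<le> (a::real) \<Longrightarrow> a \<le> 1 \<Longrightarrow> \<exists>v\<in>{0,1}. (1-v)*p + v*q \<le> (1-a)*p + a*q"
proof (cases "p \<le> q")
  case True
  assume "0 \<le> a" "a \<le> 1"
  hence "a*p \<le> a*q" using True by (simp add: mult_left_mono)
  thus ?thesis by (intro bexI[of _ 0]) (auto simp: algebra_simps)
next
  case False
  assume "0 \<le> a" "a \<le> 1"
  hence "(1-a)*q \<le> (1-a)*p" using False by (simp add: mult_left_mono)
  thus ?thesis by (intro bexI[of _ 1]) (auto simp: algebra_simps)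
qed

lemma aff_max: "0 \<le> (a::real) \<Longrightarrow> a \<le> 1 \<Longrightarrow> \<exists>v\<in>{0,1}. (1-v)*p + v*q \<ge> (1-a)*p + a*q"
  using aff_min[of a "-p" "-q"] by (auto simp: algebra_simps)

lemma cube_min:
  fixes f :: "real \<Rightarrow> real \<Rightarrow> real \<Rightarrow> real"
  assumes aff1: "\<And>a b c. f a b c = (1-a)*f 0 b c + a*f 1 b c"
    and aff2: "\<And>a b c. f a b c = (1-b)*f a 0 c + b*f a 1 c"
    and aff3: "\<And>a b c. f a b c = (1-c)*f a b 0 + c*f a b 1"
    and "a \<in> {0..1}" "b \<in> {0..1}" "c \<in> {0..1}"
  shows "\<exists>u\<in>{0,1}. \<exists>v\<in>{0,1}. \<exists>t\<in>{0,1}. f u v t \<le> f a b c"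
proof -
  obtain u where u: "u\<in>{0,1}" "f u b c \<le> f a b c"
    using aff_min[of a "f 0 b c" "f 1 b c"] assms(4) aff1 by (metis atLeastAtMost_iff)
  obtain v where v: "v\<in>{0,1}" "f u v c \<le> f u b c"
    using aff_min[of b "f u 0 c" "f u 1 c"] assms(5) aff2 by (metis atLeastAtMost_iff)
  obtain t where t: "t\<in>{0,1}" "f u v t \<le> f u v c"
    using aff_min[of c "f u v 0" "f u v 1"] assms(6) aff3 by (metis atLeastAtMost_iff)
  show ?thesis using u v t by force
qed

lemma cube_max:
  fixes f :: "real \<Rightarrow> real \<Rightarrow> real \<Rightarrow> real"
  assumes aff1: "\<And>a b c. f a b c = (1-a)*f 0 b c + a*f 1 b c"
    and aff2: "\<And>a b c. f a b c = (1-b)*f a 0 c + b*f a 1 c"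
    and aff3: "\<And>a b c. f a b c = (1-c)*f a b 0 + c*f a b 1"
    and "a \<in> {0..1}" "b \<in> {0..1}" "c \<in> {0..1}"
  shows "\<exists>u\<in>{0,1}. \<exists>v\<in>{0,1}. \<exists>t\<in>{0,1}. f u v t \<ge> f a b c"
proof -
  obtain u where u: "u\<in>{0,1}" "f u b c \<ge> f a b c"
    using aff_max[of a "f 0 b c" "f 1 b c"] assms(4) aff1 by (metis atLeastAtMost_iff)
  obtain v where v: "v\<in>{0,1}" "f u v c \<ge> f u b c"
    using aff_max[of b "f u 0 c" "f u 1 c"] assms(5) aff2 by (metis atLeastAtMost_iff)
  obtain t where t: "t\<in>{0,1}" "f u v t \<ge> f u v c"
    using aff_max[of c "f u v 0" "f u v 1"] assms(6) aff3 by (metis atLeastAtMost_iff)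
  show ?thesis using u v t by force
qed

lemma prodc2: "conj2 E H x E' H' x' (x * x') w = cev E H x w * cev E' H' x' w"
  unfolding conj2_def cev_def ind_def
  by (cases "w\<in>H"; cases "w\<in>H'"; cases "w\<in>E"; cases "w\<in>E'"; simp)

lemma prodc3: "conj3 E1 H1 E2 H2 E3 H3 x1 x2 x3 (x1 * x2) (x1 * x3) (x2 * x3) (x1 * x2 * x3) w
               = cev E1 H1 x1 w * cev E2 H2 x2 w * cev E3 H3 x3 w"
  unfolding conj3_def cev_def ind_def
  by (cases "w\<in>H1"; cases "w\<in>H2"; cases "w\<in>H3"; cases "w\<in>E1"; cases "w\<in>E2"; cases "w\<in>E3"; simp)

theorem theorem23:
  fixes E1 E2 E3 H1 H2 H3 :: "'w set" and x1 x2 x3 :: real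
  assumes indep: "logically_independent [E1, E2, E3, H1, H2, H3]"
    and H1: "H1 \<noteq> {}" and H2: "H2 \<noteq> {}" and H3: "H3 \<noteq> {}"
    and x1: "x1 \<in> {0..1}" and x2: "x2 \<in> {0..1}" and x3: "x3 \<in> {0..1}"
  shows "coherent
           [(ind E1, H1, x1), (ind E2, H2, x2), (ind E3, H3, x3),
            (conj2 E1 H1 x1 E2 H2 x2 (x1 * x2), H1 \<union> H2, x1 * x2),
            (conj2 E1 H1 x1 E3 H3 x3 (x1 * x3), H1 \<union> H3, x1 * x3),
            (conj2 E2 H2 x2 E3 H3 x3 (x2 * x3), H2 \<union> H3, x2 * x3),
            (conj3 E1 H1 E2 H2 E3 H3 x1 x2 x3 (x1 * x2) (x1 * x3) (x2 * x3) (x1 * x2 * x3),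
               H1 \<union> H2 \<union> H3, x1 * x2 * x3)]
       \<and> (\<forall>w. conj2 E1 H1 x1 E2 H2 x2 (x1 * x2) w = cev E1 H1 x1 w * cev E2 H2 x2 w)
       \<and> (\<forall>w. conj2 E1 H1 x1 E3 H3 x3 (x1 * x3) w = cev E1 H1 x1 w * cev E3 H3 x3 w)
       \<and> (\<forall>w. conj2 E2 H2 x2 E3 H3 x3 (x2 * x3) w = cev E2 H2 x2 w * cev E3 H3 x3 w)
       \<and> (\<forall>w. conj3 E1 H1 E2 H2 E3 H3 x1 x2 x3 (x1 * x2) (x1 * x3) (x2 * x3) (x1 * x2 * x3) w
               = cev E1 H1 x1 w * cev E2 H2 x2 w * cev E3 H3 x3 w)"
proof -
  have p12: "\<And>w. conj2 E1 H1 x1 E2 H2 x2 (x1 * x2) w = cev E1 H1 x1 w * cev E2 H2 x2 w"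
    by (rule prodc2)
  have p13: "\<And>w. conj2 E1 H1 x1 E3 H3 x3 (x1 * x3) w = cev E1 H1 x1 w * cev E3 H3 x3 w"
    by (rule prodc2)
  have p23: "\<And>w. conj2 E2 H2 x2 E3 H3 x3 (x2 * x3) w = cev E2 H2 x2 w * cev E3 H3 x3 w"
    by (rule prodc2)
  have p123: "\<And>w. conj3 E1 H1 E2 H2 E3 H3 x1 x2 x3 (x1 * x2) (x1 * x3) (x2 * x3) (x1 * x2 * x3) w
               = cev E1 H1 x1 w * cev E2 H2 x2 w * cev E3 H3 x3 w"
    by (rule prodc3)
  define F where "F = [(ind E1, H1, x1), (ind E2, H2, x2), (ind E3, H3, x3),
            (conj2 E1 H1 x1 E2 H2 x2 (x1 * x2), H1 \<union> H2, x1 * x2),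
            (conj2 E1 H1 x1 E3 H3 x3 (x1 * x3), H1 \<union> H3, x1 * x3),
            (conj2 E2 H2 x2 E3 H3 x3 (x2 * x3), H2 \<union> H3, x2 * x3),
            (conj3 E1 H1 E2 H2 E3 H3 x1 x2 x3 (x1 * x2) (x1 * x3) (x2 * x3) (x1 * x2 * x3),
               H1 \<union> H2 \<union> H3, x1 * x2 * x3)]"
  have "coherent F"
    unfolding coherent_def
  proof (intro allI)
    fix s :: "nat \<Rightarrow> real"
    define f where "f = (\<lambda>a b c. s 0 * a + s 1 * b + s 2 * c + s 3 * (a*b) + s 4 * (a*c)
        + s 5 * (b*c) + s 6 * (a*b*c))"
    have g: "gain F s w = f (cev E1 H1 x1 w) (cev E2 H2 x2 w) (cev E3 H3 x3 w) - f x1 x2 x3" for w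
    proof -
      have k: "\<And>E H x. ind H w * (ind E w - x) = cev E H x w - x"
        by (simp add: ind_def cev_def)
      have k2: "\<And>E H x E' H' x'. ind (H \<union> H') w * (cev E H x w * cev E' H' x' w - x * x') = cev E H x w * cev E' H' x' w - x * x'"
        by (simp add: ind_def cev_def)
      have k3: "ind (H1 \<union> H2 \<union> H3) w * (cev E1 H1 x1 w * cev E2 H2 x2 w * cev E3 H3 x3 w - x1 * x2 * x3) = cev E1 H1 x1 w * cev E2 H2 x2 w * cev E3 H3 x3 w - x1 * x2 * x3"
        by (simp add: ind_def cev_def)
      have k4: "ind (H1 \<union> H2 \<union> H3) w * (cev E1 H1 x1 w * (cev E2 H2 x2 w * cev E3 H3 x3 w) - x1 * (x2 * x3)) = cev E1 H1 x1 w * (cev E2 H2 x2 w * cev E3 H3 x3 w) - x1 * (x2 * x3)"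
        by (simp add: ind_def cev_def)
      have "gain F s w = s 0 * (cev E1 H1 x1 w - x1) + s 1 * (cev E2 H2 x2 w - x2) + s 2 * (cev E3 H3 x3 w - x3)
        + s 3 * (cev E1 H1 x1 w * cev E2 H2 x2 w - x1 * x2) + s 4 * (cev E1 H1 x1 w * cev E3 H3 x3 w - x1 * x3)
        + s 5 * (cev E2 H2 x2 w * cev E3 H3 x3 w - x2 * x3) + s 6 * (cev E1 H1 x1 w * cev E2 H2 x2 w * cev E3 H3 x3 w - x1 * x2 * x3)"
        unfolding gain_def F_def p12 p13 p23 p123
        by (simp add: numeral_eq_Suc lessThan_Suc mult.assoc k k2 k3 k4 del: mult_minus_right)
      thus ?thesis by (simp add: f_def algebra_simps)
    qed
    have a1: "\<And>a b c. f a b c = (1-a)*f 0 b c + a*f 1 b c"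
      and a2: "\<And>a b c. f a b c = (1-b)*f a 0 c + b*f a 1 c"
      and a3: "\<And>a b c. f a b c = (1-c)*f a b 0 + c*f a b 1"
      unfolding f_def by (simp_all add: algebra_simps)
    have pt: "\<exists>w\<in>(\<Union>i<length F. fst (snd (F ! i))). cev E1 H1 x1 w = u \<and> cev E2 H2 x2 w = v \<and> cev E3 H3 x3 w = t"
      if "u\<in>{0,1}" "v\<in>{0,1}" "t\<in>{0,1}" for u v t :: real
    proof -
      define b where "b = (\<lambda>i::nat. if i = 0 then u = 1 else if i = 1 then v = 1 else if i = 2 then t = 1 else True)"
      obtain w where w: "\<forall>i<length [E1, E2, E3, H1, H2, H3]. (w \<in> [E1, E2, E3, H1, H2, H3] ! i \<longleftrightarrow> b i)"
        using indep unfolding logically_independent_def by blast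
      have "w \<in> E1 \<longleftrightarrow> u = 1" using w[rule_format, of 0] by (simp add: b_def)
      moreover have "w \<in> E2 \<longleftrightarrow> v = 1" using w[rule_format, of 1] by (simp add: b_def)
      moreover have "w \<in> E3 \<longleftrightarrow> t = 1" using w[rule_format, of 2] by (simp add: b_def)
      moreover have "w \<in> H1" using w[rule_format, of 3] by (simp add: b_def)
      moreover have "w \<in> H2" using w[rule_format, of 4] by (simp add: b_def)
      moreover have "w \<in> H3" using w[rule_format, of 5] by (simp add: b_def)
      moreover have "w \<in> (\<Union>i<length F. fst (snd (F ! i)))"
        using calculation unfolding F_def by (intro UN_I[of 0]) auto
      ultimately show ?thesis using that by (intro bexI[of _ w]) (auto simp: cev_def ind_def)
    qed
    obtain u v t where "u\<in>{0,1}" "v\<in>{0,1}" "t\<in>{0,1}" "f u v t \<le> f x1 x2 x3"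
      using cube_min[OF a1 a2 a3 x1 x2 x3] by blast
    then obtain w where "w\<in>(\<Union>i<length F. fst (snd (F ! i)))" "cev E1 H1 x1 w = u" "cev E2 H2 x2 w = v" "cev E3 H3 x3 w = t"
      using pt by meson
    moreover have "gain F s w \<le> 0" using g[of w] calculation \<open>f u v t \<le> f x1 x2 x3\<close> by simp
    ultimately have "\<exists>w\<in>(\<Union>i<length F. fst (snd (F ! i))). gain F s w \<le> 0" by blast
    then obtain w where "w\<in>(\<Union>i<length F. fst (snd (F ! i)))" "gain F s w \<le> 0" by blast
    hence m1: "\<exists>w\<in>(\<Union>i<length F. fst (snd (F ! i))). gain F s w \<le> 0" by blast
    obtain u v t where "u\<in>{0,1}" "v\<in>{0,1}" "t\<in>{0,1}" "f u v t \<ge> f x1 x2 x3"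
      using cube_max[OF a1 a2 a3 x1 x2 x3] by blast
    then obtain w where "w\<in>(\<Union>i<length F. fst (snd (F ! i)))" "cev E1 H1 x1 w = u" "cev E2 H2 x2 w = v" "cev E3 H3 x3 w = t"
      using pt by meson
    moreover have "gain F s w \<ge> 0" using g[of w] calculation \<open>f u v t \<ge> f x1 x2 x3\<close> by simp
    ultimately have "\<exists>w\<in>(\<Union>i<length F. fst (snd (F ! i))). gain F s w \<ge> 0" by blast
    then obtain w where "w\<in>(\<Union>i<length F. fst (snd (F ! i)))" "gain F s w \<ge> 0" by blast
    hence "\<exists>w\<in>(\<Union>i<length F. fst (snd (F ! i))). 0 \<le> gain F s w" by blast
    with m1 show "(\<exists>w\<in>(\<Union>i<length F. fst (snd (F ! i))). gain F s w \<le> 0) \<and>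
       (\<exists>w\<in>(\<Union>i<length F. fst (snd (F ! i))). 0 \<le> gain F s w)" by blast
  qed
  thus ?thesis unfolding F_def[symmetric] using p12 p13 p23 p123 by blast
qed

end
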